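(* Let $n_p\ge 1$, let $P\subset\mathbb{R}^{n_p}$ be convex and compact, let $f:\mathbb{R}\times\mathbb{R}^{n_p}\to\mathbb{R}$, let $Q\subset P$ be the (assumed nonempty) set of $\mathbf{p}\in P$ for which $f(z,\mathbf{p})=0$ has at least one solution $z\in\mathbb{R}$, and let $x:Q\to\mathbb{R}$ satisfy $f(x(\mathbf{p}),\mathbf{p})=0$ for all $\mathbf{p}\in Q$. Let $X:=[x^{L},x^{U}]$ be an interval with $x(\mathbf{p})\in X$ for all $\mathbf{p}\in Q$. Suppose $f^{cv}$ and $f^{cc}$ are convex and concave relaxations of $f$ on $X\times P$ which are piecewise affine of the form $$f^{cv}(\xi,\mathbf{p})=\max\{[\mathbf{a}^{cv,i}]^\top\mathbf{p}+\alpha^{cv,i}\xi+b^{cv,i}: i\in\{1,\dots,k\}\},\qquad f^{cc}(\xi,\mathbf{p})=\min\{[\mathbf{a}^{cc,j}]^\top\mathbf{p}+\alpha^{cc,j}\xi+b^{cc,j}: j\in\{1,\dots,\ell\}\},$$ with $\mathbf{a}^{cv,i},\mathbf{a}^{cc,j}\in\mathbb{R}^{n_p}$ and $\alpha^{cv,i},b^{cv,i},\alpha^{cc,j},b^{cc,j}\in\mathbb{R}$. Let $K^-=\{i:\alpha^{cv,i}<0\}$, $K^+=\{i:\alpha^{cv,i}>0\}$, $L^-=\{j:\alpha^{cc,j}<0\}$, $L^+=\{j:\alpha^{cc,j}>0\}$, and for each $i,j$ define $g_i(\mathbf{p}):=\frac{-1}{\alpha^{cv,i}}([\mathbf{a}^{cv,i}]^\top\mathbf{p}+b^{cv,i})$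 and $\gamma_j(\mathbf{p}):=\frac{-1}{\alpha^{cc,j}}([\mathbf{a}^{cc,j}]^\top\mathbf{p}+b^{cc,j})$ (for the indices where the denominators are nonzero). Define $h^{cv},h^{cc}:P\to\mathbb{R}$ by $$h^{cv}(\mathbf{p}):=\max\big(\{g_i(\mathbf{p}):i\in K^-\}\cup\{\gamma_j(\mathbf{p}):j\in L^+\}\big),\qquad h^{cc}(\mathbf{p}):=\min\big(\{g_i(\mathbf{p}):i\in K^+\}\cup\{\gamma_j(\mathbf{p}):j\in L^-\}\big),$$ and define $x^{cv}(\mathbf{p}):=\max\{x^{L},h^{cv}(\mathbf{p})\}$ and $x^{cc}(\mathbf{p}):=\min\{x^{U},h^{cc}(\mathbf{p})\}$. Then for any $\mathbf{p}\in\mathrm{int}(Q)$, a subgradient $\mathbf{s}^{cv}\in\mathbb{R}^{n_p}$ of $x^{cv}$ at $\mathbf{p}$ is given by: $\mathbf{s}^{cv}:=\mathbf{0}$ if $x^{cv}(\mathbf{p})=x^{L}$; otherwise, if $x^{cv}(\mathbf{p})=g_i(\mathbf{p})$ for some $i\in K^-$, then $\mathbf{s}^{cv}:=-\mathbf{a}^{cv,i}/\alpha^{cv,i}$; otherwise there exists $j\in L^+$ with $x^{cv}(\mathbf{p})=\gamma_j(\mathbf{p})$, and $\mathbf{s}^{cv}:=-\mathbf{a}^{cc,j}/\alpha^{cc,j}$. Similarly, a subgradient $\mathbf{s}^{cc}\in\mathbb{R}^{n_p}$ of the concave function $x^{cc}$ at $\mathbf{p}$ is given by: $\mathbf{s}^{cc}:=\mathbf{0}$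 if $x^{cc}(\mathbf{p})=x^{U}$; otherwise, if $x^{cc}(\mathbf{p})=\gamma_j(\mathbf{p})$ for some $j\in L^-$, then $\mathbf{s}^{cc}:=-\mathbf{a}^{cc,j}/\alpha^{cc,j}$; otherwise there exists $i\in K^+$ with $x^{cc}(\mathbf{p})=g_i(\mathbf{p})$, and $\mathbf{s}^{cc}:=-\mathbf{a}^{cv,i}/\alpha^{cv,i}$.
   Context: A convex relaxation of $f$ on $X\times P$ is a convex function $f^{cv}$ on $X\times P$ with $f^{cv}\le f$ there; a concave relaxation is a concave $f^{cc}$ with $f^{cc}\ge f$. The functions $x^{cv}$, $x^{cc}$ are (closed-form expressions of) the implicit function relaxations $x^{cv}(\mathbf{p})=\inf\{\xi\in X: f^{cv}(\xi,\mathbf{p})\le 0\le f^{cc}(\xi,\mathbf{p})\}$ and $x^{cc}(\mathbf{p})=\sup\{\xi\in X: f^{cv}(\xi,\mathbf{p})\le 0\le f^{cc}(\xi,\mathbf{p})\}$. A subgradient of a convex function $\phi$ at $\mathbf{p}$ is $\mathbf{s}$ with $\phi(\boldsymbol{\eta})\ge\phi(\mathbf{p})+\langle\mathbf{s},\boldsymbol{\eta}-\mathbf{p}\rangle$ for all $\boldsymbol{\eta}$ in the domain; for a concave $\phi$ it is $\mathbf{s}$ with $\phi(\boldsymbol{\eta})\le\phi(\mathbf{p})+\langle\mathbf{s},\boldsymbol{\eta}-\mathbf{p}\rangle$. *)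

theory Defs
  imports "HOL-Analysis.Analysis"
begin

definition pw_max :: "(nat \<Rightarrow> real^'n) \<Rightarrow> (nat \<Rightarrow> real) \<Rightarrow> (nat \<Rightarrow> real) \<Rightarrow> nat
    \<Rightarrow> real \<Rightarrow> real^'n \<Rightarrow> real" where
  "pw_max a al b k xi p = Max {a i \<bullet> p + al i * xi + b i | i. i \<in> {1..k}}"

definition pw_min :: "(nat \<Rightarrow> real^'n) \<Rightarrow> (nat \<Rightarrow> real) \<Rightarrow> (nat \<Rightarrow> real) \<Rightarrow> nat
    \<Rightarrow> real \<Rightarrow> real^'n \<Rightarrow> real" where
  "pw_min a al b l xi p = Min {a j \<bullet> p + al j * xi + b j | j. j \<in> {1..l}}"

definition aff_root :: "real^'n \<Rightarrow> real \<Rightarrow> real \<Rightarrow> real^'n \<Rightarrow> real" where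
  "aff_root a al b p = (-1 / al) * (a \<bullet> p + b)"

(* x^cv(p) = max{x^L, h^cv(p)}, h^cv = max over g_i (i in K^-) and gamma_j (j in L^+);
   written as one finite Max (an empty index set contributes nothing, i.e. h^cv = -infinity) *)
definition xcv_fun :: "real \<Rightarrow> (nat \<Rightarrow> real^'n) \<Rightarrow> (nat \<Rightarrow> real) \<Rightarrow> (nat \<Rightarrow> real) \<Rightarrow> nat
    \<Rightarrow> (nat \<Rightarrow> real^'n) \<Rightarrow> (nat \<Rightarrow> real) \<Rightarrow> (nat \<Rightarrow> real) \<Rightarrow> nat \<Rightarrow> real^'n \<Rightarrow> real" where
  "xcv_fun xL acv alcv bcv k acc alcc bcc l p =
     Max ({xL}
          \<union> {aff_root (acv i) (alcv i) (bcv i) p | i. i \<in> {1..k} \<and> alcv i < 0}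
          \<union> {aff_root (acc j) (alcc j) (bcc j) p | j. j \<in> {1..l} \<and> alcc j > 0})"

definition xcc_fun :: "real \<Rightarrow> (nat \<Rightarrow> real^'n) \<Rightarrow> (nat \<Rightarrow> real) \<Rightarrow> (nat \<Rightarrow> real) \<Rightarrow> nat
    \<Rightarrow> (nat \<Rightarrow> real^'n) \<Rightarrow> (nat \<Rightarrow> real) \<Rightarrow> (nat \<Rightarrow> real) \<Rightarrow> nat \<Rightarrow> real^'n \<Rightarrow> real" where
  "xcc_fun xU acv alcv bcv k acc alcc bcc l p =
     Min ({xU}
          \<union> {aff_root (acv i) (alcv i) (bcv i) p | i. i \<in> {1..k} \<and> alcv i > 0}
          \<union> {aff_root (acc j) (alcc j) (bcc j) p | j. j \<in> {1..l} \<and> alcc j < 0})"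

definition is_cv_subgrad :: "'a::real_inner set \<Rightarrow> ('a \<Rightarrow> real) \<Rightarrow> 'a \<Rightarrow> 'a \<Rightarrow> bool" where
  "is_cv_subgrad S phi p s \<longleftrightarrow> (\<forall>eta\<in>S. phi eta \<ge> phi p + s \<bullet> (eta - p))"

definition is_cc_subgrad :: "'a::real_inner set \<Rightarrow> ('a \<Rightarrow> real) \<Rightarrow> 'a \<Rightarrow> 'a \<Rightarrow> bool" where
  "is_cc_subgrad S phi p s \<longleftrightarrow> (\<forall>eta\<in>S. phi eta \<le> phi p + s \<bullet> (eta - p))"

end

theory Submission
  imports Defs
begin

lemma aff_root_lin:
  "aff_root a al b eta = aff_root a al b p + (- (1 / al) *\<^sub>R a) \<bullet> (eta - p)"
  unfolding aff_root_def by (simp add: inner_diff_right algebra_simps)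

lemma fin_set: "finite {g i | i::nat. 1 \<le> i \<and> i \<le> k \<and> Q i}"
proof -
  have "{g i | i::nat. 1 \<le> i \<and> i \<le> k \<and> Q i} = g ` {i. 1 \<le> i \<and> i \<le> k \<and> Q i}" by auto
  moreover have "finite {i::nat. 1 \<le> i \<and> i \<le> k \<and> Q i}"
    by (rule finite_subset[of _ "{..k}"]) auto
  ultimately show ?thesis by simp
qed

lemma fin_xcv: "finite ({xL::real}
          \<union> {aff_root (acv i) (alcv i) (bcv i) p | i::nat. i \<in> {1..k} \<and> alcv i < 0}
          \<union> {aff_root (acc j) (alcc j) (bcc j) p | j::nat. j \<in> {1..l} \<and> alcc j > 0})"
  using fin_set[of "\<lambda>i. aff_root (acv i) (alcv i) (bcv i) p" k "\<lambda>i. alcv i < 0"]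
    fin_set[of "\<lambda>i. aff_root (acc i) (alcc i) (bcc i) p" l "\<lambda>i. alcc i > 0"] by simp

lemma fin_xcc: "finite ({xU::real}
          \<union> {aff_root (acv i) (alcv i) (bcv i) p | i::nat. i \<in> {1..k} \<and> alcv i > 0}
          \<union> {aff_root (acc j) (alcc j) (bcc j) p | j::nat. j \<in> {1..l} \<and> alcc j < 0})"
  using fin_set[of "\<lambda>i. aff_root (acv i) (alcv i) (bcv i) p" k "\<lambda>i. alcv i > 0"]
    fin_set[of "\<lambda>i. aff_root (acc i) (alcc i) (bcc i) p" l "\<lambda>i. alcc i < 0"] by simp

lemma xcv_ge_L: "xL \<le> xcv_fun xL acv alcv bcv k acc alcc bcc l eta"
  unfolding xcv_fun_def by (rule Max_ge[OF fin_xcv]) auto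

lemma xcv_ge_i: "i \<in> {1..k} \<Longrightarrow> alcv i < 0 \<Longrightarrow>
   aff_root (acv i) (alcv i) (bcv i) eta \<le> xcv_fun xL acv alcv bcv k acc alcc bcc l eta"
  unfolding xcv_fun_def by (rule Max_ge[OF fin_xcv]) auto

lemma xcv_ge_j: "j \<in> {1..l} \<Longrightarrow> alcc j > 0 \<Longrightarrow>
   aff_root (acc j) (alcc j) (bcc j) eta \<le> xcv_fun xL acv alcv bcv k acc alcc bcc l eta"
  unfolding xcv_fun_def by (rule Max_ge[OF fin_xcv]) auto

lemma xcv_in: "xcv_fun xL acv alcv bcv k acc alcc bcc l eta \<in> ({xL::real}
          \<union> {aff_root (acv i) (alcv i) (bcv i) eta | i. i \<in> {1..k} \<and> alcv i < 0}
          \<union> {aff_root (acc j) (alcc j) (bcc j) eta | j. j \<in> {1..l} \<and> alcc j > 0})"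
  unfolding xcv_fun_def by (rule Max_in[OF fin_xcv]) auto

lemma xcc_le_U: "xcc_fun xU acv alcv bcv k acc alcc bcc l eta \<le> xU"
  unfolding xcc_fun_def by (rule Min_le[OF fin_xcc]) auto

lemma xcc_le_i: "i \<in> {1..k} \<Longrightarrow> alcv i > 0 \<Longrightarrow>
   xcc_fun xU acv alcv bcv k acc alcc bcc l eta \<le> aff_root (acv i) (alcv i) (bcv i) eta"
  unfolding xcc_fun_def by (rule Min_le[OF fin_xcc]) auto

lemma xcc_le_j: "j \<in> {1..l} \<Longrightarrow> alcc j < 0 \<Longrightarrow>
   xcc_fun xU acv alcv bcv k acc alcc bcc l eta \<le> aff_root (acc j) (alcc j) (bcc j) eta"
  unfolding xcc_fun_def by (rule Min_le[OF fin_xcc]) auto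

lemma xcc_in: "xcc_fun xU acv alcv bcv k acc alcc bcc l eta \<in> ({xU::real}
          \<union> {aff_root (acv i) (alcv i) (bcv i) eta | i. i \<in> {1..k} \<and> alcv i > 0}
          \<union> {aff_root (acc j) (alcc j) (bcc j) eta | j. j \<in> {1..l} \<and> alcc j < 0})"
  unfolding xcc_fun_def by (rule Min_in[OF fin_xcc]) auto

theorem proposition4p1:
  fixes P :: "(real^'n) set"
    and f :: "real \<Rightarrow> real^'n \<Rightarrow> real"
    and x :: "real^'n \<Rightarrow> real"
    and xL xU :: real
    and k l :: nat
    and acv acc :: "nat \<Rightarrow> real^'n"
    and alcv bcv alcc bcc :: "nat \<Rightarrow> real"
    and p :: "real^'n"
  defines "Q \<equiv> {q \<in> P. \<exists>z. f z q = 0}"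
    and "xcv \<equiv> xcv_fun xL acv alcv bcv k acc alcc bcc l"
    and "xcc \<equiv> xcc_fun xU acv alcv bcv k acc alcc bcc l"
  assumes "convex P" and "compact P"
    and "Q \<noteq> {}"
    and "\<forall>q\<in>Q. f (x q) q = 0"
    and "\<forall>q\<in>Q. x q \<in> {xL..xU}"
    and "k \<ge> 1" and "l \<ge> 1"
    and "convex_on ({xL..xU} \<times> P) (\<lambda>(xi, q). pw_max acv alcv bcv k xi q)"
    and "concave_on ({xL..xU} \<times> P) (\<lambda>(xi, q). pw_min acc alcc bcc l xi q)"
    and "\<forall>xi\<in>{xL..xU}. \<forall>q\<in>P. pw_max acv alcv bcv k xi q \<le> f xi q"
    and "\<forall>xi\<in>{xL..xU}. \<forall>q\<in>P. f xi q \<le> pw_min acc alcc bcc l xi q"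
    and "p \<in> interior Q"
  shows
    "(xcv p = xL \<longrightarrow> is_cv_subgrad P xcv p 0)
     \<and> (xcv p \<noteq> xL \<longrightarrow>
          (\<forall>i\<in>{1..k}. alcv i < 0 \<longrightarrow> xcv p = aff_root (acv i) (alcv i) (bcv i) p \<longrightarrow>
              is_cv_subgrad P xcv p (- (1 / alcv i) *\<^sub>R acv i))
        \<and> ((\<not> (\<exists>i\<in>{1..k}. alcv i < 0 \<and> xcv p = aff_root (acv i) (alcv i) (bcv i) p)) \<longrightarrow>
              (\<exists>j\<in>{1..l}. alcc j > 0 \<and> xcv p = aff_root (acc j) (alcc j) (bcc j) p)
            \<and> (\<forall>j\<in>{1..l}. alcc j > 0 \<longrightarrow> xcv p = aff_root (acc j) (alcc j) (bcc j) p \<longrightarrow>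
                 is_cv_subgrad P xcv p (- (1 / alcc j) *\<^sub>R acc j))))
     \<and> (xcc p = xU \<longrightarrow> is_cc_subgrad P xcc p 0)
     \<and> (xcc p \<noteq> xU \<longrightarrow>
          (\<forall>j\<in>{1..l}. alcc j < 0 \<longrightarrow> xcc p = aff_root (acc j) (alcc j) (bcc j) p \<longrightarrow>
              is_cc_subgrad P xcc p (- (1 / alcc j) *\<^sub>R acc j))
        \<and> ((\<not> (\<exists>j\<in>{1..l}. alcc j < 0 \<and> xcc p = aff_root (acc j) (alcc j) (bcc j) p)) \<longrightarrow>
              (\<exists>i\<in>{1..k}. alcv i > 0 \<and> xcc p = aff_root (acv i) (alcv i) (bcv i) p)
            \<and> (\<forall>i\<in>{1..k}. alcv i > 0 \<longrightarrow> xcc p = aff_root (acv i) (alcv i) (bcv i) p \<longrightarrow>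
                 is_cc_subgrad P xcc p (- (1 / alcv i) *\<^sub>R acv i))))"
proof -
  let ?cv = "xcv_fun xL acv alcv bcv k acc alcc bcc l"
  let ?cc = "xcc_fun xU acv alcv bcv k acc alcc bcc l"
  have A: "xcv p = xL \<longrightarrow> is_cv_subgrad P xcv p 0"
    unfolding is_cv_subgrad_def assms(2) using xcv_ge_L[of xL acv alcv bcv k acc alcc bcc l] by simp
  have B: "\<forall>i\<in>{1..k}. alcv i < 0 \<longrightarrow> xcv p = aff_root (acv i) (alcv i) (bcv i) p \<longrightarrow>
              is_cv_subgrad P xcv p (- (1 / alcv i) *\<^sub>R acv i)"
    unfolding is_cv_subgrad_def assms(2)
    by (metis aff_root_lin xcv_ge_i)
  have C: "\<forall>j\<in>{1..l}. alcc j > 0 \<longrightarrow> xcv p = aff_root (acc j) (alcc j) (bcc j) p \<longrightarrow>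
                 is_cv_subgrad P xcv p (- (1 / alcc j) *\<^sub>R acc j)"
    unfolding is_cv_subgrad_def assms(2)
    by (metis aff_root_lin xcv_ge_j)
  have D: "xcv p \<noteq> xL \<Longrightarrow> \<not> (\<exists>i\<in>{1..k}. alcv i < 0 \<and> xcv p = aff_root (acv i) (alcv i) (bcv i) p) \<Longrightarrow>
              (\<exists>j\<in>{1..l}. alcc j > 0 \<and> xcv p = aff_root (acc j) (alcc j) (bcc j) p)"
    using xcv_in[of xL acv alcv bcv k acc alcc bcc l p] unfolding assms(2) by blast
  have A2: "xcc p = xU \<longrightarrow> is_cc_subgrad P xcc p 0"
    unfolding is_cc_subgrad_def assms(3) using xcc_le_U[of xU acv alcv bcv k acc alcc bcc l] by simp
  have B2: "\<forall>j\<in>{1..l}. alcc j < 0 \<longrightarrow> xcc p = aff_root (acc j) (alcc j) (bcc j) p \<longrightarrow>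
              is_cc_subgrad P xcc p (- (1 / alcc j) *\<^sub>R acc j)"
    unfolding is_cc_subgrad_def assms(3)
    by (metis aff_root_lin xcc_le_j)
  have C2: "\<forall>i\<in>{1..k}. alcv i > 0 \<longrightarrow> xcc p = aff_root (acv i) (alcv i) (bcv i) p \<longrightarrow>
                 is_cc_subgrad P xcc p (- (1 / alcv i) *\<^sub>R acv i)"
    unfolding is_cc_subgrad_def assms(3)
    by (metis aff_root_lin xcc_le_i)
  have D2: "xcc p \<noteq> xU \<Longrightarrow> \<not> (\<exists>j\<in>{1..l}. alcc j < 0 \<and> xcc p = aff_root (acc j) (alcc j) (bcc j) p) \<Longrightarrow>
              (\<exists>i\<in>{1..k}. alcv i > 0 \<and> xcc p = aff_root (acv i) (alcv i) (bcv i) p)"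
    using xcc_in[of xU acv alcv bcv k acc alcc bcc l p] unfolding assms(3) by blast
  show ?thesis using A B C D A2 B2 C2 D2 by blast
qed

end
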